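(* Fix constants $B>0$, $1\le\Gamma\le 3$, $0<\kappa\le 1$, and fixed Riemann data $\varrho_l>0$, $\varrho_r>0$, $\upsilon_l,\upsilon_r\ge 0$ with $\upsilon_r\le \upsilon_l-\frac{B}{\varrho_l^{\kappa}}$. For parameters $a>0$, $A>0$ (with $a<1/\max(\varrho_l,\varrho_r)$), let $p(\varrho)=A\left(\frac{\varrho}{1-a\varrho}\right)^{\Gamma}-\frac{B}{\varrho^{\kappa}}$, $p_l=p(\varrho_l)$, and let $\varrho_*=\varrho_*(a,A)\in(\varrho_l,1/a)$ be determined by $\upsilon_r=-p(\varrho_* )+\upsilon_l+p_l$. Then $$\lim_{a,A\to 0} A\left(\frac{\varrho_*}{1-a\varrho_*}\right)^{\Gamma}=\upsilon_l-\upsilon_r-\frac{B}{\varrho_l^{\kappa}}.$$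
   Context: $\varrho_*$ is the intermediate density of the shock-plus-contact-discontinuity Riemann solution of the system $\varrho_t+(\varrho\upsilon)_x=0$, $(\varrho(\upsilon+p))_t+(\varrho\upsilon(\upsilon+p))_x=0$ with Riemann data $(\varrho_l,\upsilon_l)$ for $x<0$ and $(\varrho_r,\upsilon_r)$ for $x>0$: the shock connects $(\varrho_l,\upsilon_l)$ to $(\varrho_*,\upsilon_r)$ and the contact discontinuity connects $(\varrho_*,\upsilon_r)$ to $(\varrho_r,\upsilon_r)$. The limit $a,A\to0$ is taken with $B,\Gamma,\kappa$ and the data fixed. *)

theory Defs
  imports "HOL-Analysis.Analysis"
begin

definition pres :: "real \<Rightarrow> real \<Rightarrow> real \<Rightarrow> real \<Rightarrow> real \<Rightarrow> real \<Rightarrow> real" where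
  "pres a A B \<Gamma> \<kappa> \<rho> = A * (\<rho> / (1 - a * \<rho>)) powr \<Gamma> - B / \<rho> powr \<kappa>"

end

theory Submission
  imports Defs
begin

lemma core:
  fixes B \<Gamma> \<kappa> \<rho>l L a A s e M :: real
  assumes B: "B > 0" and G: "1 \<le> \<Gamma>" and k: "0 < \<kappa>" and rl: "\<rho>l > 0"
    and L: "L \<ge> 0" and e: "e > 0" and M: "M = (2*B/e) powr (1/\<kappa>)"
    and a: "0 < a" "a \<le> 1/(2*\<rho>l)" "a \<le> 1/(2*M)" and A: "0 < A"
    and A1: "A * (2*\<rho>l) powr \<Gamma> < e/2" and A2: "A * (2*M) powr \<Gamma> < e/2"
    and s: "\<rho>l < s" "s < 1/a"
    and eq: "A * (s / (1 - a * s)) powr \<Gamma> = L + B / s powr \<kappa> + A * (\<rho>l / (1 - a * \<rho>l)) powr \<Gamma>"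
  shows "\<bar>A * (s / (1 - a * s)) powr \<Gamma> - L\<bar> < e"
proof -
  have s0: "s > 0" using s rl by linarith
  have ar: "a * \<rho>l \<le> 1/2" using a rl by (simp add: field_simps)
  have q1: "0 \<le> \<rho>l / (1 - a * \<rho>l)" using ar rl by simp
  have q2: "\<rho>l / (1 - a * \<rho>l) \<le> 2*\<rho>l" using ar rl by (simp add: field_simps)
  have c1: "(\<rho>l / (1 - a * \<rho>l)) powr \<Gamma> \<le> (2*\<rho>l) powr \<Gamma>"
    by (rule powr_mono2) (use G q1 q2 in auto)
  have c: "A * (\<rho>l / (1 - a * \<rho>l)) powr \<Gamma> < e/2"
    using mult_left_mono[OF c1, of A] A A1 by linarith
  have c0: "A * (\<rho>l / (1 - a * \<rho>l)) powr \<Gamma> \<ge> 0" using A by simp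
  have y0: "B / s powr \<kappa> > 0" using B s0 by simp
  have y: "B / s powr \<kappa> < e/2"
  proof (rule ccontr)
    assume "\<not> ?thesis"
    hence "e/2 \<le> B / s powr \<kappa>" by simp
    hence "s powr \<kappa> \<le> 2*B/e" using e s0 by (simp add: field_simps)
    hence "(s powr \<kappa>) powr (1/\<kappa>) \<le> (2*B/e) powr (1/\<kappa>)"
      by (intro powr_mono2) (use k in auto)
    hence sM: "s \<le> M" using k s0 M by (simp add: powr_powr)
    have M0: "M > 0" using sM s0 by linarith
    have as1: "a * s \<le> a * M" using sM a(1) by simp
    have as2: "a * M \<le> 1/2" using a(3) M0 by (simp add: field_simps)
    have as: "a * s \<le> 1/2" using as1 as2 by linarith
    have r0: "0 \<le> s / (1 - a * s)" using as s0 by simp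
    have m1: "M * (1/2) \<le> M * (1 - a * s)" using as M0 by (intro mult_left_mono) auto
    have r1: "s / (1 - a * s) \<le> 2*M" using as m1 sM by (simp add: pos_divide_le_eq)
    have pm: "(s / (1 - a * s)) powr \<Gamma> \<le> (2*M) powr \<Gamma>"
      by (rule powr_mono2) (use G r0 r1 in auto)
    have "A * (s / (1 - a * s)) powr \<Gamma> < e/2"
      using mult_left_mono[OF pm, of A] A A2 by linarith
    thus False using eq L c0 \<open>e/2 \<le> B / s powr \<kappa>\<close> by linarith
  qed
  have "A * (s / (1 - a * s)) powr \<Gamma> - L = B / s powr \<kappa> + A * (\<rho>l / (1 - a * \<rho>l)) powr \<Gamma>"
    using eq by linarith
  moreover have "B / s powr \<kappa> + A * (\<rho>l / (1 - a * \<rho>l)) powr \<Gamma> < e"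
    using y c by linarith
  moreover have "0 \<le> B / s powr \<kappa> + A * (\<rho>l / (1 - a * \<rho>l)) powr \<Gamma>"
    using y0 c0 by linarith
  ultimately show ?thesis by (simp only: abs_of_nonneg)
qed

theorem lemma3p2:
  fixes B \<Gamma> \<kappa> \<rho>l \<rho>r \<upsilon>l \<upsilon>r :: real
    and \<rho>s :: "real \<Rightarrow> real \<Rightarrow> real"
  assumes "B > 0" and "1 \<le> \<Gamma>" and "\<Gamma> \<le> 3" and "0 < \<kappa>" and "\<kappa> \<le> 1"
    and "\<rho>l > 0" and "\<rho>r > 0" and "\<upsilon>l \<ge> 0" and "\<upsilon>r \<ge> 0"
    and "\<upsilon>r \<le> \<upsilon>l - B / \<rho>l powr \<kappa>"
    and \<rho>s_def: "\<And>a A. 0 < a \<Longrightarrow> 0 < A \<Longrightarrow> a < 1 / max \<rho>l \<rho>r \<Longrightarrow>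
        \<rho>s a A \<in> {\<rho>l<..<1 / a} \<and>
        \<upsilon>r = - pres a A B \<Gamma> \<kappa> (\<rho>s a A) + \<upsilon>l + pres a A B \<Gamma> \<kappa> \<rho>l"
  shows "((\<lambda>(a, A). A * (\<rho>s a A / (1 - a * \<rho>s a A)) powr \<Gamma>)
           \<longlongrightarrow> \<upsilon>l - \<upsilon>r - B / \<rho>l powr \<kappa>)
         (at (0, 0) within {x :: real \<times> real. 0 < fst x \<and> 0 < snd x})"
proof (unfold Lim_within, intro allI impI)
  fix e :: real assume e: "e > 0"
  define L where "L = \<upsilon>l - \<upsilon>r - B / \<rho>l powr \<kappa>"
  define M where "M = (2*B/e) powr (1/\<kappa>)"
  have M0: "M > 0" unfolding M_def using assms(1) e by simp
  define P1 where "P1 = (2*\<rho>l) powr \<Gamma>"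
  define P2 where "P2 = (2*M) powr \<Gamma>"
  have P1: "P1 > 0" unfolding P1_def using assms(6) by simp
  have P2: "P2 > 0" unfolding P2_def using M0 by simp
  define d where "d = min (1 / max \<rho>l \<rho>r) (min (1/(2*\<rho>l)) (min (1/(2*M))
       (min (e/(4*P1)) (e/(4*P2)))))"
  have d0: "d > 0" unfolding d_def using assms(6,7) M0 P1 P2 e by auto
  show "\<exists>d>0. \<forall>x\<in>{x :: real \<times> real. 0 < fst x \<and> 0 < snd x}.
           0 < dist x (0, 0) \<and> dist x (0, 0) < d \<longrightarrow>
           dist ((\<lambda>(a, A). A * (\<rho>s a A / (1 - a * \<rho>s a A)) powr \<Gamma>) x)
            (\<upsilon>l - \<upsilon>r - B / \<rho>l powr \<kappa>) < e"
  proof (intro exI[of _ d] conjI ballI impI d0)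
    fix x :: "real \<times> real"
    assume x: "x \<in> {x. 0 < fst x \<and> 0 < snd x}" and dx: "0 < dist x (0, 0) \<and> dist x (0, 0) < d"
    obtain a A where xa: "x = (a, A)" by (cases x)
    have a0: "0 < a" and A0: "0 < A" using x xa by auto
    have "dist a 0 \<le> dist x (0,0)" "dist A 0 \<le> dist x (0,0)" unfolding xa
      by (simp_all add: dist_Pair_Pair real_sqrt_sum_squares_ge1 real_sqrt_sum_squares_ge2)
    hence ad: "a < d" and Ad: "A < d" using dx a0 A0 by auto
    have h1: "a < 1 / max \<rho>l \<rho>r" using ad unfolding d_def by simp
    have h2: "a \<le> 1/(2*\<rho>l)" "a \<le> 1/(2*M)" using ad unfolding d_def by auto
    have "A < e/(4*P1)" "A < e/(4*P2)" using Ad unfolding d_def by auto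
    hence h3: "A * P1 < e/2" "A * P2 < e/2" using P1 P2 e by (simp_all add: field_simps)
    from \<rho>s_def[OF a0 A0 h1] have s: "\<rho>l < \<rho>s a A" "\<rho>s a A < 1/a"
      and eq0: "\<upsilon>r = - pres a A B \<Gamma> \<kappa> (\<rho>s a A) + \<upsilon>l + pres a A B \<Gamma> \<kappa> \<rho>l" by auto
    have eq: "A * (\<rho>s a A / (1 - a * \<rho>s a A)) powr \<Gamma> = L + B / \<rho>s a A powr \<kappa>
        + A * (\<rho>l / (1 - a * \<rho>l)) powr \<Gamma>"
      using eq0 unfolding pres_def L_def by linarith
    have "\<bar>A * (\<rho>s a A / (1 - a * \<rho>s a A)) powr \<Gamma> - L\<bar> < e"
      by (rule core[OF assms(1,2,4,6) _ e M_def a0 h2 A0 _ _ s eq])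
        (use assms(10) h3 P1_def P2_def L_def in auto)
    thus "dist ((\<lambda>(a, A). A * (\<rho>s a A / (1 - a * \<rho>s a A)) powr \<Gamma>) x)
            (\<upsilon>l - \<upsilon>r - B / \<rho>l powr \<kappa>) < e"
      unfolding xa L_def by (simp add: dist_real_def)
  qed
qed

end
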